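(* Let $\mathsf{X}$ be a finite connected graph with no tails and with $l$ ramified vertices, and suppose $\mathsf{X}$ has a segment decomposition into segments $\mathsf{S}^1,\dots,\mathsf{S}^k$, where $\mathsf{S}^1,\dots,\mathsf{S}^{k'}$ are the 2-segments and $\mathsf{S}^{k'+1},\dots,\mathsf{S}^k$ the 1-segments. Let $\mathsf{T}$ be a spanning tree of $\mathsf{X}$ and set $\mathsf{T}^i=\mathsf{T}\cap\mathsf{S}^i$. Then $\mathsf{T}^i$ is a spanning tree of the 2-segment $\mathsf{S}^i$ for exactly $l-1$ indices $i$.
   Context: Graphs are finite and undirected, possibly with multiple edges and loops. Some vertices are designated ramified; the others are unramified. A tail is an unramified vertex with exactly one neighbour joined to it by exactly one edge. For ramified $v,v'$, an admissible path from $v$ to $v'$ is a path whose intermediate vertices are all unramified (closed if $v=v'$). Segment decomposition: colour each admissible path between distinct ramified vertices so that paths sharing an edge receive the same colour; this must be possible with all paths of a colour joining the same pair of ramified vertices, and each colour class (union of its paths) is a 2-segment (contains exactly two ramified vertices). Every remaining edge lies on an admissible closed path at one ramified vertex through unramified vertices not in any 2-segment; colouring these closed paths likewise (paths sharing an edge get the same colour, no already coloured edge reused) gives the 1-segments (exactly one ramified vertex). The segments are pairwise edge-disjoint, share no unramified vertex, and cover $\mathsf{X}$; a segment with $t$ ramified vertices is a $t$-segment. *)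

theory Defs
  imports Main
begin

text \<open>Finite multigraphs (multiple edges and loops allowed): a vertex set V, an edge
set E, and for every edge its set of end vertices (a singleton for a loop).\<close>

definition multigraph :: "'v set \<Rightarrow> 'e set \<Rightarrow> ('e \<Rightarrow> 'v set) \<Rightarrow> bool" where
  "multigraph V E ends \<longleftrightarrow> finite V \<and> finite E \<and>
     (\<forall>e\<in>E. ends e \<subseteq> V \<and> 1 \<le> card (ends e) \<and> card (ends e) \<le> 2)"

definition walk :: "('e \<Rightarrow> 'v set) \<Rightarrow> 'e set \<Rightarrow> 'v list \<Rightarrow> 'e list \<Rightarrow> bool" where
  "walk ends F vs es \<longleftrightarrow> length vs = Suc (length es) \<and> set es \<subseteq> F \<and>
     (\<forall>i<length es. ends (es ! i) = {vs ! i, vs ! Suc i})"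

definition open_path :: "('e \<Rightarrow> 'v set) \<Rightarrow> 'e set \<Rightarrow> 'v list \<Rightarrow> 'e list \<Rightarrow> bool" where
  "open_path ends F vs es \<longleftrightarrow> walk ends F vs es \<and> es \<noteq> [] \<and> distinct vs"

text \<open>A closed path (cycle): nonempty closed walk, no repeated vertex except the
start = end, no repeated edge (so loops and pairs of parallel edges are cycles).\<close>
definition closed_path :: "('e \<Rightarrow> 'v set) \<Rightarrow> 'e set \<Rightarrow> 'v list \<Rightarrow> 'e list \<Rightarrow> bool" where
  "closed_path ends F vs es \<longleftrightarrow> walk ends F vs es \<and> es \<noteq> [] \<and> hd vs = last vs \<and>
     distinct (tl vs) \<and> distinct es"

definition inner :: "'v list \<Rightarrow> 'v set" where
  "inner vs = set (butlast (tl vs))"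

definition connected_on :: "('e \<Rightarrow> 'v set) \<Rightarrow> 'v set \<Rightarrow> 'e set \<Rightarrow> bool" where
  "connected_on ends V F \<longleftrightarrow> (\<forall>u\<in>V. \<forall>w\<in>V. \<exists>vs es.
      walk ends F vs es \<and> set vs \<subseteq> V \<and> hd vs = u \<and> last vs = w)"

definition is_tree :: "('e \<Rightarrow> 'v set) \<Rightarrow> 'v set \<Rightarrow> 'e set \<Rightarrow> bool" where
  "is_tree ends V F \<longleftrightarrow> (\<forall>e\<in>F. ends e \<subseteq> V) \<and> connected_on ends V F \<and>
     \<not> (\<exists>vs es. closed_path ends F vs es)"

definition neighbours :: "'e set \<Rightarrow> ('e \<Rightarrow> 'v set) \<Rightarrow> 'v \<Rightarrow> 'v set" where
  "neighbours E ends u = {w. \<exists>e\<in>E. ends e = {u, w}}"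

definition is_tail :: "'e set \<Rightarrow> ('e \<Rightarrow> 'v set) \<Rightarrow> 'v set \<Rightarrow> 'v \<Rightarrow> bool" where
  "is_tail E ends R u \<longleftrightarrow> u \<notin> R \<and>
     (\<exists>w. neighbours E ends u = {w} \<and> card {e\<in>E. ends e = {u, w}} = 1)"

definition adm2 :: "('e \<Rightarrow> 'v set) \<Rightarrow> 'e set \<Rightarrow> 'v set \<Rightarrow> ('v list \<times> 'e list) set" where
  "adm2 ends E R = {(vs, es). open_path ends E vs es \<and> hd vs \<in> R \<and> last vs \<in> R \<and>
      inner vs \<inter> R = {}}"

definition share_rel :: "('v list \<times> 'e list) set \<Rightarrow> (('v list \<times> 'e list) \<times> ('v list \<times> 'e list)) set" where
  "share_rel P = {(p, q). p \<in> P \<and> q \<in> P \<and> set (snd p) \<inter> set (snd q) \<noteq> {}}"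

definition colour_classes :: "('v list \<times> 'e list) set \<Rightarrow> ('v list \<times> 'e list) set set" where
  "colour_classes P = P // (share_rel P)\<^sup>+"

definition seg :: "('v list \<times> 'e list) set \<Rightarrow> 'v set \<times> 'e set" where
  "seg C = ((\<Union>p\<in>C. set (fst p)), (\<Union>p\<in>C. set (snd p)))"

text \<open>Segment decomposition; S2 is the set of 2-segments, S1 the set of 1-segments,
each segment given as a pair (vertex set, edge set).\<close>
definition segment_decomposition ::
  "'v set \<Rightarrow> 'e set \<Rightarrow> ('e \<Rightarrow> 'v set) \<Rightarrow> 'v set \<Rightarrow> ('v set \<times> 'e set) set \<Rightarrow> ('v set \<times> 'e set) set \<Rightarrow> bool" where
  "segment_decomposition V E ends R S2 S1 \<longleftrightarrow>
    (let P2 = adm2 ends E R;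
         cls2 = colour_classes P2;
         U2 = (\<Union>p\<in>P2. set (fst p));
         C2 = (\<Union>p\<in>P2. set (snd p));
         P1 = {(vs, es). closed_path ends E vs es \<and> hd vs \<in> R \<and>
                 inner vs \<subseteq> V - R - U2 \<and> set es \<inter> C2 = {}};
         cls1 = colour_classes P1
     in (\<forall>C\<in>cls2. \<exists>a b. \<forall>p\<in>C. {hd (fst p), last (fst p)} = {a, b})
      \<and> (\<forall>C\<in>cls2. card (fst (seg C) \<inter> R) = 2)
      \<and> (\<forall>e\<in>E - C2. \<exists>p\<in>P1. e \<in> set (snd p))
      \<and> (\<forall>C\<in>cls1. card (fst (seg C) \<inter> R) = 1)
      \<and> S2 = seg ` cls2 \<and> S1 = seg ` cls1
      \<and> (\<forall>S\<in>S2 \<union> S1. \<forall>S'\<in>S2 \<union> S1. S \<noteq> S' \<longrightarrow>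
            snd S \<inter> snd S' = {} \<and> fst S \<inter> fst S' \<subseteq> R)
      \<and> (\<Union>S\<in>S2 \<union> S1. fst S) = V \<and> (\<Union>S\<in>S2 \<union> S1. snd S) = E)"

end

theory Submission
  imports Defs
begin

definition reach :: "('e \<Rightarrow> 'v set) \<Rightarrow> 'e set \<Rightarrow> 'v \<Rightarrow> 'v \<Rightarrow> bool" where
  "reach ends F = (\<lambda>a b. \<exists>e\<in>F. ends e = {a, b})\<^sup>*\<^sup>*"

lemma reach_refl: "reach ends F a a"
  unfolding reach_def by simp

lemma reach_step: "e \<in> F \<Longrightarrow> ends e = {a, b} \<Longrightarrow> reach ends F a b"
  unfolding reach_def by (rule r_into_rtranclp) blast

lemma reach_trans: "reach ends F a b \<Longrightarrow> reach ends F b c \<Longrightarrow> reach ends F a c"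
  unfolding reach_def by (rule rtranclp_trans)

lemma reach_sym: "reach ends F a b \<Longrightarrow> reach ends F b a"
  unfolding reach_def
proof (induction rule: rtranclp_induct)
  case base then show ?case by simp
next
  case (step y z)
  then obtain e where "e \<in> F" "ends e = {z, y}" by (auto simp: insert_commute)
  then have "(\<lambda>a b. \<exists>e\<in>F. ends e = {a, b}) z y" by blast
  then show ?case using step(3) by (rule converse_rtranclp_into_rtranclp)
qed

lemma reach_mono: "F \<subseteq> G \<Longrightarrow> reach ends F a b \<Longrightarrow> reach ends G a b"
  unfolding reach_def
  by (erule rtranclp_mono[THEN predicate2D, rotated]) blast

lemma reach_empty: "reach ends {} a b \<Longrightarrow> a = b"
  unfolding reach_def by (induction rule: rtranclp_induct) auto

lemma walk_Nil: "walk ends F vs [] \<longleftrightarrow> (\<exists>v. vs = [v])"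
  unfolding walk_def by (auto simp: length_Suc_conv)

lemma walk_Cons: "walk ends F (a # vs) (e # es) \<longleftrightarrow> e \<in> F \<and> ends e = {a, hd vs} \<and> walk ends F vs es"
proof
  assume w: "walk ends F (a # vs) (e # es)"
  then have ne: "vs \<noteq> []" unfolding walk_def by auto
  from w have "ends e = {a, hd vs}" unfolding walk_def
    by (auto dest!: spec[of _ 0] simp: ne hd_conv_nth)
  moreover from w have "walk ends F vs es" unfolding walk_def
    by (auto dest!: spec[of _ "Suc i" for i])
  ultimately show "e \<in> F \<and> ends e = {a, hd vs} \<and> walk ends F vs es" using w
    unfolding walk_def by auto
next
  assume h: "e \<in> F \<and> ends e = {a, hd vs} \<and> walk ends F vs es"
  then have ne: "vs \<noteq> []" unfolding walk_def by auto
  show "walk ends F (a # vs) (e # es)" unfolding walk_def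
  proof (intro conjI allI impI)
    show "length (a # vs) = Suc (length (e # es))" using h unfolding walk_def by simp
    show "set (e # es) \<subseteq> F" using h unfolding walk_def by simp
    fix i assume "i < length (e # es)"
    then show "ends ((e # es) ! i) = {(a # vs) ! i, (a # vs) ! Suc i}"
      using h ne by (cases i) (auto simp: walk_def hd_conv_nth)
  qed
qed

lemma walk_ConsE: "walk ends F vs (e # es) \<Longrightarrow> \<exists>a vs'. vs = a # vs'"
  unfolding walk_def by (cases vs) auto

lemma walk_ne: "walk ends F vs es \<Longrightarrow> vs \<noteq> []"
  unfolding walk_def by auto

lemma walk_reach: "walk ends F vs es \<Longrightarrow> reach ends F (hd vs) (last vs)"
proof (induction es arbitrary: vs)
  case Nil then obtain v where "vs = [v]" by (auto simp: walk_Nil)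
  then show ?case by (simp add: reach_refl)
next
  case (Cons e es)
  obtain a vs' where vs: "vs = a # vs'" using walk_ConsE[OF Cons.prems(1)] by blast
  with Cons.prems have h: "e \<in> F" "ends e = {a, hd vs'}" "walk ends F vs' es"
    by (auto simp: walk_Cons)
  have "vs' \<noteq> []" using h(3) walk_ne by blast
  then have "hd vs = a" "last vs = last vs'" using vs by auto
  note eqs = this
  have r1: "reach ends F a (hd vs')" by (rule reach_step[of e F ends a "hd vs'", OF h(1) h(2)])
  show ?case unfolding eqs by (rule reach_trans[OF r1 Cons.IH[OF h(3)]])
qed

lemma walk_snoc: "walk ends F vs es \<Longrightarrow> e \<in> F \<Longrightarrow> ends e = {last vs, c} \<Longrightarrow>
  walk ends F (vs @ [c]) (es @ [e])"
proof (induction es arbitrary: vs)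
  case Nil then show ?case by (auto simp: walk_Nil walk_Cons)
next
  case (Cons e' es)
  obtain a vs' where vs: "vs = a # vs'" using walk_ConsE[OF Cons.prems(1)] by blast
  with Cons.prems have h: "e' \<in> F" "ends e' = {a, hd vs'}" "walk ends F vs' es"
    by (auto simp: walk_Cons)
  have ne: "vs' \<noteq> []" using h(3) walk_ne by blast
  then show ?case using vs h Cons.IH[OF h(3) Cons.prems(2)] Cons.prems(3)
    by (auto simp: walk_Cons)
qed

lemma walk_take: "walk ends F vs es \<Longrightarrow> k < length vs \<Longrightarrow>
  walk ends F (take (Suc k) vs) (take k es)"
proof (induction es arbitrary: vs k)
  case Nil then show ?case by (auto simp: walk_Nil)
next
  case (Cons e es)
  obtain a vs' where vs: "vs = a # vs'" using walk_ConsE[OF Cons.prems(1)] by blast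
  with Cons.prems have h: "e \<in> F" "ends e = {a, hd vs'}" "walk ends F vs' es"
    by (auto simp: walk_Cons)
  have ne: "vs' \<noteq> []" using h(3) walk_ne by blast
  show ?case
  proof (cases k)
    case 0 then show ?thesis using vs by (auto simp: walk_Nil)
  next
    case (Suc k')
    then have "k' < length vs'" using Cons.prems vs by auto
    then show ?thesis using Suc vs h ne Cons.IH[OF h(3)]
      by (auto simp: walk_Cons hd_take)
  qed
qed

lemma walk_mono: "F \<subseteq> G \<Longrightarrow> walk ends F vs es \<Longrightarrow> walk ends G vs es"
  unfolding walk_def by blast

lemma closed_path_mono: "F \<subseteq> G \<Longrightarrow> closed_path ends F vs es \<Longrightarrow> closed_path ends G vs es"
  unfolding closed_path_def using walk_mono by blast

lemma walk_edge_ends: "walk ends F vs es \<Longrightarrow> e \<in> set es \<Longrightarrow> ends e \<subseteq> set vs"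
proof (induction es arbitrary: vs)
  case Nil then show ?case by simp
next
  case (Cons e' es)
  obtain a vs' where vs: "vs = a # vs'" using walk_ConsE[OF Cons.prems(1)] by blast
  with Cons.prems have h: "e' \<in> F" "ends e' = {a, hd vs'}" "walk ends F vs' es"
    by (auto simp: walk_Cons)
  have ne: "vs' \<noteq> []" using h(3) walk_ne by blast
  have "hd vs' \<in> set vs'" using ne by simp
  show ?case
  proof (cases "e = e'")
    case True then show ?thesis using h vs \<open>hd vs' \<in> set vs'\<close> by auto
  next
    case False
    then have "e \<in> set es" using Cons.prems(2) by simp
    then show ?thesis using Cons.IH[OF h(3)] vs by auto
  qed
qed

lemma walk_set: "walk ends F vs es \<Longrightarrow> \<forall>e\<in>F. ends e \<subseteq> W \<Longrightarrow> hd vs \<in> W \<Longrightarrow> set vs \<subseteq> W"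
proof (induction es arbitrary: vs)
  case Nil then show ?case by (auto simp: walk_Nil)
next
  case (Cons e es)
  obtain a vs' where vs: "vs = a # vs'" using walk_ConsE[OF Cons.prems(1)] by blast
  with Cons.prems have h: "e \<in> F" "ends e = {a, hd vs'}" "walk ends F vs' es"
    by (auto simp: walk_Cons)
  have "hd vs' \<in> W" using h Cons.prems(2) by auto
  then show ?case using Cons.IH[OF h(3) Cons.prems(2)] vs Cons.prems(3) by auto
qed

lemma walk_distinct_es: "walk ends F vs es \<Longrightarrow> distinct vs \<Longrightarrow> distinct es"
proof (induction es arbitrary: vs)
  case Nil then show ?case by simp
next
  case (Cons e es)
  obtain a vs' where vs: "vs = a # vs'" using walk_ConsE[OF Cons.prems(1)] by blast
  with Cons.prems have h: "e \<in> F" "ends e = {a, hd vs'}" "walk ends F vs' es"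
    by (auto simp: walk_Cons)
  have "e \<notin> set es"
  proof
    assume "e \<in> set es"
    then have "ends e \<subseteq> set vs'" using walk_edge_ends[OF h(3)] by blast
    then show False using h(2) vs Cons.prems(2) by auto
  qed
  then show ?case using Cons.IH[OF h(3)] vs Cons.prems(2) by auto
qed

lemma reach_path: "reach ends F a b \<Longrightarrow>
  \<exists>vs es. walk ends F vs es \<and> hd vs = a \<and> last vs = b \<and> distinct vs"
  unfolding reach_def
proof (induction rule: rtranclp_induct)
  case base
  have "walk ends F [a] []" by (simp add: walk_Nil)
  then show ?case by fastforce
next
  case (step y z)
  then obtain vs es where w: "walk ends F vs es" "hd vs = a" "last vs = y" "distinct vs" by blast
  from step(2) obtain e where e: "e \<in> F" "ends e = {y, z}" by blast
  have ne: "vs \<noteq> []" using w walk_ne by blast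
  show ?case
  proof (cases "z \<in> set vs")
    case True
    then obtain k where k: "k < length vs" "vs ! k = z" by (auto simp: in_set_conv_nth)
    have "walk ends F (take (Suc k) vs) (take k es)" using walk_take[OF w(1) k(1)] .
    moreover have "hd (take (Suc k) vs) = a" using w ne by (simp add: hd_take)
    moreover have "last (take (Suc k) vs) = z" using k by (simp add: take_Suc_conv_app_nth)
    moreover have "distinct (take (Suc k) vs)" using w by simp
    ultimately show ?thesis by (intro exI[of _ "take (Suc k) vs"] exI[of _ "take k es"]) simp
  next
    case False
    have "walk ends F (vs @ [z]) (es @ [e])" using walk_snoc[OF w(1) e(1)] e(2) w(3) by simp
    moreover have "hd (vs @ [z]) = a" using w ne by simp
    moreover have "last (vs @ [z]) = z" "distinct (vs @ [z])" using False w by auto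
    ultimately show ?thesis by (intro exI[of _ "vs @ [z]"] exI[of _ "es @ [e]"]) simp
  qed
qed

lemma no_cycle_not_reach:
  assumes "\<not> (\<exists>vs es. closed_path ends (insert e F) vs es)" "e \<notin> F" "ends e = {u, w}"
  shows "\<not> reach ends F u w"
proof
  assume r: "reach ends F u w"
  obtain vs es where w: "walk ends F vs es" "hd vs = u" "last vs = w" "distinct vs"
    using reach_path[OF r] by blast
  have "vs \<noteq> []" using walk_ne[OF w(1)] .
  then obtain vs' where vs: "vs = u # vs'" using w(2) by (cases vs) auto
  have w1: "walk ends (insert e F) vs es" by (rule walk_mono[OF _ w(1)]) blast
  have ee: "ends e = {last vs, u}" using assms(3) w(3) by (simp add: insert_commute)
  have "walk ends (insert e F) (vs @ [u]) (es @ [e])"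
    by (rule walk_snoc[OF w1 _ ee]) simp
  moreover have "distinct (es @ [e])" using walk_distinct_es[OF w(1) w(4)] assms(2) w(1)
    unfolding walk_def by auto
  moreover have "distinct (tl (vs @ [u]))" using vs w(4) by auto
  ultimately have "closed_path ends (insert e F) (vs @ [u]) (es @ [e])"
    unfolding closed_path_def using vs by auto
  then show False using assms(1) by blast
qed

definition cls :: "('e \<Rightarrow> 'v set) \<Rightarrow> 'e set \<Rightarrow> 'v set \<Rightarrow> 'v \<Rightarrow> 'v set" where
  "cls ends F W v = {y\<in>W. reach ends F v y}"

definition comps :: "('e \<Rightarrow> 'v set) \<Rightarrow> 'e set \<Rightarrow> 'v set \<Rightarrow> 'v set set" where
  "comps ends F W = cls ends F W ` W"

lemma cls_eq: "reach ends F v v' \<Longrightarrow> cls ends F W v = cls ends F W v'"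
  unfolding cls_def using reach_trans reach_sym by metis

lemma reach_insert:
  assumes "ends e = {u, w}"
  shows "reach ends (insert e F) x y \<longleftrightarrow> reach ends F x y \<or> (reach ends F x u \<and> reach ends F w y)
     \<or> (reach ends F x w \<and> reach ends F u y)" (is "?L \<longleftrightarrow> ?R x y")
proof
  assume ?L
  then show "?R x y" unfolding reach_def[of ends "insert e F"]
  proof (induction rule: rtranclp_induct)
    case base then show ?case by (simp add: reach_refl)
  next
    case (step y z)
    from step(2) obtain e' where e': "e' \<in> insert e F" "ends e' = {y, z}" by blast
    show ?case
    proof (cases "e' \<in> F")
      case True
      then have s: "reach ends F y z" by (rule reach_step[of e' F ends y z, OF _ e'(2)])
      then show ?thesis using step(3) reach_trans by metis
    next
      case False
      then have "e' = e" using e' by blast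
      then have yz: "{y, z} = {u, w}" using e' assms by simp
      then have "(y = u \<and> z = w) \<or> (y = w \<and> z = u)" by (auto simp: doubleton_eq_iff)
      then show ?thesis using step(3) reach_trans reach_sym reach_refl by metis
    qed
  qed
next
  assume "?R x y"
  have F: "F \<subseteq> insert e F" by blast
  have uw: "reach ends (insert e F) u w" by (rule reach_step[of e "insert e F" ends u w]) (simp_all add: assms)
  have wu: "reach ends (insert e F) w u" using reach_sym[OF uw] .
  from \<open>?R x y\<close> show ?L
    using reach_mono[OF F] reach_trans uw wu by metis
qed

lemma comps_empty: "finite W \<Longrightarrow> card (comps ends {} W) = card W"
proof -
  assume fin: "finite W"
  have "\<And>v. v \<in> W \<Longrightarrow> cls ends {} W v = {v}"
    unfolding cls_def using reach_empty reach_refl by fastforce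
  then have "comps ends {} W = (\<lambda>v. {v}) ` W" unfolding comps_def by simp
  moreover have "inj_on (\<lambda>v. {v}) W" by (auto simp: inj_on_def)
  ultimately show ?thesis by (simp add: card_image)
qed

lemma comps_insert:
  assumes fin: "finite W" and uW: "u \<in> W" and wW: "w \<in> W" and ee: "ends e = {u, w}"
    and nr: "\<not> reach ends F u w"
  shows "card (comps ends (insert e F) W) + 1 = card (comps ends F W)"
proof -
  define cu where "cu = cls ends F W u"
  define cw where "cw = cls ends F W w"
  have R': "\<And>x y. reach ends (insert e F) x y \<longleftrightarrow> reach ends F x y \<or> (reach ends F x u \<and> reach ends F w y)
     \<or> (reach ends F x w \<and> reach ends F u y)" using reach_insert[where ends=ends and e=e and u=u and w=w, OF ee] .
  have cls1: "cls ends (insert e F) W v = cu \<union> cw" if "reach ends F v u \<or> reach ends F v w" for v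
  proof -
    have "reach ends (insert e F) v y \<longleftrightarrow> reach ends F u y \<or> reach ends F w y" for y
      using that R'[of v y] nr reach_trans reach_sym by metis
    then show ?thesis unfolding cls_def cu_def cw_def by auto
  qed
  have cls2: "cls ends (insert e F) W v = cls ends F W v" if "\<not> reach ends F v u" "\<not> reach ends F v w" for v
  proof -
    have "reach ends (insert e F) v y \<longleftrightarrow> reach ends F v y" for y
      using that R'[of v y] by blast
    then show ?thesis unfolding cls_def by auto
  qed
  have memcls: "v \<in> cls ends F W v" if "v \<in> W" for v using that reach_refl unfolding cls_def by fastforce
  have incls: "reach ends F v x" if "x \<in> cls ends F W v" for v x using that unfolding cls_def by auto
  have cu_in: "cu \<in> comps ends F W" and cw_in: "cw \<in> comps ends F W"
    unfolding comps_def cu_def cw_def using uW wW by auto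
  have cuw: "cu \<noteq> cw"
  proof
    assume "cu = cw"
    then have "u \<in> cw" using memcls[OF uW] cu_def by simp
    then show False using nr incls reach_sym cw_def by metis
  qed
  have eq: "comps ends (insert e F) W = insert (cu \<union> cw) (comps ends F W - {cu, cw})"
  proof (rule set_eqI, rule iffI)
    fix c assume "c \<in> comps ends (insert e F) W"
    then obtain v where v: "v \<in> W" "c = cls ends (insert e F) W v" unfolding comps_def by auto
    show "c \<in> insert (cu \<union> cw) (comps ends F W - {cu, cw})"
    proof (cases "reach ends F v u \<or> reach ends F v w")
      case True then show ?thesis using cls1 v by auto
    next
      case False
      then have c: "c = cls ends F W v" using cls2 v by auto
      have "c \<noteq> cu" using False memcls[OF v(1)] incls reach_sym c cu_def by metis
      moreover have "c \<noteq> cw" using False memcls[OF v(1)] incls reach_sym c cw_def by metis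
      ultimately show ?thesis using c v unfolding comps_def by auto
    qed
  next
    fix c assume c: "c \<in> insert (cu \<union> cw) (comps ends F W - {cu, cw})"
    show "c \<in> comps ends (insert e F) W"
    proof (cases "c = cu \<union> cw")
      case True
      then have "c = cls ends (insert e F) W u" using cls1[of u] reach_refl by metis
      then show ?thesis using uW unfolding comps_def by auto
    next
      case False
      then obtain v where v: "v \<in> W" "c = cls ends F W v" "c \<noteq> cu" "c \<noteq> cw"
        using c unfolding comps_def by auto
      have "\<not> reach ends F v u" using v cls_eq cu_def by metis
      moreover have "\<not> reach ends F v w" using v cls_eq cw_def by metis
      ultimately have "c = cls ends (insert e F) W v" using cls2 v by auto
      then show ?thesis using v unfolding comps_def by auto
    qed
  qed
  have notin: "cu \<union> cw \<notin> comps ends F W - {cu, cw}"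
  proof
    assume "cu \<union> cw \<in> comps ends F W - {cu, cw}"
    then obtain v where v: "v \<in> W" "cu \<union> cw = cls ends F W v" "cls ends F W v \<noteq> cu"
      unfolding comps_def by auto
    have "u \<in> cls ends F W v" using v(2) memcls[OF uW] cu_def by auto
    then have "reach ends F v u" using incls by blast
    then show False using v cls_eq cu_def by metis
  qed
  have finc: "finite (comps ends F W)" unfolding comps_def using fin by simp
  have sub: "{cu, cw} \<subseteq> comps ends F W" using cu_in cw_in by simp
  have c2: "card {cu, cw} = 2" using cuw by simp
  have "card (comps ends F W - {cu, cw}) = card (comps ends F W) - 2"
    using card_Diff_subset[OF _ sub] c2 by simp
  moreover have "card (comps ends F W) \<ge> 2" using card_mono[OF finc sub] c2 by simp
  moreover have "card (comps ends (insert e F) W) = Suc (card (comps ends F W - {cu, cw}))"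
    unfolding eq using notin finc by simp
  ultimately show ?thesis by simp
qed

lemma forest_count:
  assumes "finite F" "finite W" "\<forall>e\<in>F. \<exists>a b. ends e = {a, b} \<and> a \<in> W \<and> b \<in> W"
    "\<not> (\<exists>vs es. closed_path ends F vs es)"
  shows "card F + card (comps ends F W) = card W"
  using assms
proof (induction F rule: finite_induct)
  case empty then show ?case using comps_empty by simp
next
  case (insert e F)
  obtain u w where uw: "ends e = {u, w}" "u \<in> W" "w \<in> W" using insert.prems(2) by blast
  have acyc: "\<not> (\<exists>vs es. closed_path ends F vs es)"
    using insert.prems(3) closed_path_mono[of F "insert e F" ends] by blast
  have IH: "card F + card (comps ends F W) = card W"
    using insert.IH[OF insert.prems(1) _ acyc] insert.prems(2) by blast
  have nr: "\<not> reach ends F u w" using no_cycle_not_reach[where ends=ends and e=e and F=F and u=u and w=w] insert.prems(3) insert.hyps(2) uw(1) by blast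
  have "card (comps ends (insert e F) W) + 1 = card (comps ends F W)"
    using comps_insert[where ends=ends and e=e and F=F and u=u and w=w and W=W] insert.prems(1) uw nr by blast
  then show ?case using IH insert.hyps by simp
qed

lemma comps_le:
  assumes "finite W" "Q \<subseteq> W" "\<forall>v\<in>W. \<exists>q\<in>Q. reach ends F v q"
  shows "card (comps ends F W) \<le> card Q"
proof -
  have "comps ends F W \<subseteq> cls ends F W ` Q"
  proof
    fix c assume "c \<in> comps ends F W"
    then obtain v where v: "v \<in> W" "c = cls ends F W v" unfolding comps_def by auto
    then obtain q where q: "q \<in> Q" "reach ends F v q" using assms(3) by blast
    have "c = cls ends F W q" using v(2) cls_eq[OF q(2)] by simp
    then show "c \<in> cls ends F W ` Q" using q(1) by blast
  qed
  then have "card (comps ends F W) \<le> card (cls ends F W ` Q)"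
    using assms(1,2) by (intro card_mono) (auto intro: finite_subset)
  also have "\<dots> \<le> card Q" using assms(1,2) by (intro card_image_le) (auto intro: finite_subset)
  finally show ?thesis .
qed

lemma comps_ge: "finite W \<Longrightarrow> W \<noteq> {} \<Longrightarrow> card (comps ends F W) \<ge> 1"
  unfolding comps_def by (simp add: Suc_le_eq card_gt_0_iff)

lemma conn_iff:
  assumes "finite W" "W \<noteq> {}" "\<forall>e\<in>F. ends e \<subseteq> W"
  shows "connected_on ends W F \<longleftrightarrow> card (comps ends F W) = 1"
proof
  assume c: "connected_on ends W F"
  obtain v0 where v0: "v0 \<in> W" using assms(2) by blast
  have eqv: "cls ends F W v = cls ends F W v0" if vW: "v \<in> W" for v
  proof -
    from c v0 vW obtain vs es where "walk ends F vs es" "hd vs = v0" "last vs = v"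
      unfolding connected_on_def by blast
    then have r0: "reach ends F v0 v" using walk_reach[of ends F vs es] by simp
    show ?thesis using cls_eq[OF reach_sym[OF r0]] by simp
  qed
  have "comps ends F W = (\<lambda>v. cls ends F W v0) ` W" unfolding comps_def
    by (rule image_cong[OF refl eqv])
  then have "comps ends F W = {cls ends F W v0}" using v0 by (simp add: image_constant)
  then show "card (comps ends F W) = 1" by simp
next
  assume "card (comps ends F W) = 1"
  then obtain c where c: "comps ends F W = {c}" by (rule card_1_singletonE)
  show "connected_on ends W F" unfolding connected_on_def
  proof (intro ballI)
    fix u w assume uw: "u \<in> W" "w \<in> W"
    have "cls ends F W u = cls ends F W w" using c uw unfolding comps_def by blast
    moreover have "w \<in> cls ends F W w" using uw reach_refl unfolding cls_def by fastforce
    ultimately have r: "reach ends F u w" unfolding cls_def by auto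
    obtain vs es where w: "walk ends F vs es" "hd vs = u" "last vs = w" "distinct vs"
      using reach_path[OF r] by blast
    have "set vs \<subseteq> W" using walk_set[OF w(1) assms(3)] w(2) uw by simp
    then show "\<exists>vs es. walk ends F vs es \<and> set vs \<subseteq> W \<and> hd vs = u \<and> last vs = w"
      using w by blast
  qed
qed

lemma classes_sub: "C \<in> colour_classes P \<Longrightarrow> C \<subseteq> P"
proof -
  assume C: "C \<in> colour_classes P"
  have "(share_rel P)\<^sup>+ \<subseteq> P \<times> P" by (rule trancl_subset_Sigma) (auto simp: share_rel_def)
  then show "C \<subseteq> P" using C unfolding colour_classes_def quotient_def by blast
qed

lemma seg_edges: "\<forall>p\<in>C. walk ends E (fst p) (snd p) \<Longrightarrow> e \<in> snd (seg C) \<Longrightarrow> ends e \<subseteq> fst (seg C)"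
proof -
  assume w: "\<forall>p\<in>C. walk ends E (fst p) (snd p)" and e: "e \<in> snd (seg C)"
  then obtain p where p: "p \<in> C" "e \<in> set (snd p)" unfolding seg_def by auto
  have "ends e \<subseteq> set (fst p)" using walk_edge_ends[of ends E "fst p" "snd p" e] w p by blast
  then show ?thesis using p unfolding seg_def by auto
qed

lemma ends_form: "multigraph V E ends \<Longrightarrow> e \<in> E \<Longrightarrow> \<exists>a b. ends e = {a, b}"
proof -
  assume m: "multigraph V E ends" and e: "e \<in> E"
  then have c: "1 \<le> card (ends e)" "card (ends e) \<le> 2" unfolding multigraph_def by auto
  then have "card (ends e) = 1 \<or> card (ends e) = 2" by linarith
  then show ?thesis
  proof
    assume "card (ends e) = 1"
    then obtain a where "ends e = {a}" by (rule card_1_singletonE)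
    then show ?thesis by blast
  next
    assume "card (ends e) = 2"
    then obtain a b where "ends e = {a, b}" by (auto simp: card_2_iff)
    then show ?thesis by blast
  qed
qed

lemma walk_to_R:
  assumes "walk ends T vs es" "hd vs \<in> W" "last vs \<in> R"
    "\<forall>e\<in>T. \<forall>x\<in>ends e. x \<in> W - R \<longrightarrow> e \<in> D" "\<forall>e\<in>D. ends e \<subseteq> W"
  shows "\<exists>r\<in>W \<inter> R. reach ends (T \<inter> D) (hd vs) r"
  using assms
proof (induction es arbitrary: vs)
  case Nil
  then obtain v where v: "vs = [v]" by (auto simp: walk_Nil)
  then show ?case using Nil.prems reach_refl[of ends "T \<inter> D" v] by auto
next
  case (Cons e es)
  obtain a vs' where vs: "vs = a # vs'" using walk_ConsE[OF Cons.prems(1)] by blast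
  with Cons.prems have h: "e \<in> T" "ends e = {a, hd vs'}" "walk ends T vs' es"
    by (auto simp: walk_Cons)
  have ne: "vs' \<noteq> []" using h(3) walk_ne by blast
  show ?case
  proof (cases "a \<in> R")
    case True
    then show ?thesis using vs Cons.prems(2) reach_refl[of ends "T \<inter> D" a] by auto
  next
    case False
    then have "a \<in> W - R" using vs Cons.prems(2) by simp
    then have eD: "e \<in> D" using Cons.prems(4) h(1,2) by blast
    then have "hd vs' \<in> W" using Cons.prems(5) h(2) by blast
    moreover have "last vs' \<in> R" using Cons.prems(3) vs ne by simp
    ultimately obtain r where r: "r \<in> W \<inter> R" "reach ends (T \<inter> D) (hd vs') r"
      using Cons.IH[OF h(3) _ _ Cons.prems(4,5)] by blast
    have "reach ends (T \<inter> D) a (hd vs')"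
      by (rule reach_step[of e "T \<inter> D" ends a "hd vs'"]) (use h eD in auto)
    then have "reach ends (T \<inter> D) a r" using reach_trans r(2) by metis
    then show ?thesis using r(1) vs by auto
  qed
qed

theorem lemma5p10:
  fixes V :: "'v set" and E :: "'e set" and ends :: "'e \<Rightarrow> 'v set"
    and R :: "'v set" and l :: nat
    and S2 S1 :: "('v set \<times> 'e set) set" and T :: "'e set"
  assumes "multigraph V E ends"
    and "connected_on ends V E"
    and "R \<subseteq> V"
    and "\<forall>u\<in>V. \<not> is_tail E ends R u"
    and "card R = l"
    and "segment_decomposition V E ends R S2 S1"
    and "T \<subseteq> E"
    and "is_tree ends V T"
  shows "card {S \<in> S2. is_tree ends (fst S) (T \<inter> snd S)} = l - 1"
proof -
  obtain P1 where
    s2: "S2 = seg ` colour_classes (adm2 ends E R)" and s1: "S1 = seg ` colour_classes P1" and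
    p1: "\<forall>p\<in>P1. closed_path ends E (fst p) (snd p)" and
    c2: "\<forall>C\<in>colour_classes (adm2 ends E R). card (fst (seg C) \<inter> R) = 2" and
    c1: "\<forall>C\<in>colour_classes P1. card (fst (seg C) \<inter> R) = 1" and
    disj: "\<forall>S\<in>S2 \<union> S1. \<forall>S'\<in>S2 \<union> S1. S \<noteq> S' \<longrightarrow> snd S \<inter> snd S' = {} \<and> fst S \<inter> fst S' \<subseteq> R" and
    cv: "(\<Union>S\<in>S2 \<union> S1. fst S) = V" and ce: "(\<Union>S\<in>S2 \<union> S1. snd S) = E"
  proof -
    let ?P1 = "{(vs, es). closed_path ends E vs es \<and> hd vs \<in> R \<and>
                 inner vs \<subseteq> V - R - (\<Union>p\<in>adm2 ends E R. set (fst p)) \<and>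
                 set es \<inter> (\<Union>p\<in>adm2 ends E R. set (snd p)) = {}}"
    show thesis
      apply (rule that[of ?P1])
      prefer 3 apply auto[1]
      apply (insert assms(6), unfold segment_decomposition_def Let_def, elim conjE, assumption)+
      done
  qed
  define Segs where "Segs = S2 \<union> S1"
  have r2: "\<forall>S\<in>S2. card (fst S \<inter> R) = 2" using s2 c2 by blast
  have r1: "\<forall>S\<in>S1. card (fst S \<inter> R) = 1" using s1 c1 by blast
  have segs: "\<forall>S\<in>Segs. \<forall>e\<in>snd S. ends e \<subseteq> fst S"
  proof (intro ballI)
    fix S e assume S: "S \<in> Segs" and e: "e \<in> snd S"
    show "ends e \<subseteq> fst S"
    proof (cases "S \<in> S2")
      case True
      then obtain C where C: "C \<in> colour_classes (adm2 ends E R)" "S = seg C" using s2 by blast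
      have "\<forall>p\<in>C. walk ends E (fst p) (snd p)"
        using classes_sub[OF C(1)] unfolding adm2_def open_path_def by auto
      then show ?thesis using seg_edges[of C ends E e] C e by simp
    next
      case False
      then obtain C where C: "C \<in> colour_classes P1" "S = seg C" using s1 S Segs_def by blast
      have "\<forall>p\<in>C. walk ends E (fst p) (snd p)"
        using classes_sub[OF C(1)] p1 unfolding closed_path_def by blast
      then show ?thesis using seg_edges[of C ends E e] C e by simp
    qed
  qed
  have finV: "finite V" and finE: "finite E" using assms(1) unfolding multigraph_def by auto
  have fsub: "\<forall>S\<in>Segs. fst S \<subseteq> V \<and> snd S \<subseteq> E" using cv ce Segs_def by blast
  have finSegs: "finite Segs"
  proof (rule finite_subset)
    show "Segs \<subseteq> Pow V \<times> Pow E"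
    proof
      fix S assume S: "S \<in> Segs"
      show "S \<in> Pow V \<times> Pow E" unfolding mem_Times_iff Pow_iff using fsub S by blast
    qed
    show "finite (Pow V \<times> Pow E)" using finV finE by simp
  qed
  have Eform: "\<forall>e\<in>E. \<exists>a b. ends e = {a, b}" using ends_form[OF assms(1)] by blast
  have EV: "\<forall>e\<in>E. ends e \<subseteq> V" using assms(1) unfolding multigraph_def by blast
  have Tacyc: "\<not> (\<exists>vs es. closed_path ends T vs es)" using assms(8) unfolding is_tree_def by blast
  have Tconn: "connected_on ends V T" using assms(8) unfolding is_tree_def by blast
  show ?thesis
  proof (cases "R = {}")
    case True
    then have "S2 = {}" using r2 by fastforce
    moreover have "l = 0" using True assms(5) by simp
    ultimately show ?thesis by simp
  next
    case False
    then have Vne: "V \<noteq> {}" using assms(3) by blast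
    have TVe: "\<forall>e\<in>T. \<exists>a b. ends e = {a, b} \<and> a \<in> V \<and> b \<in> V"
    proof
      fix e assume e: "e \<in> T"
      then have eE: "e \<in> E" using assms(7) by blast
      obtain a b where ab: "ends e = {a, b}" using Eform eE by blast
      have "ends e \<subseteq> V" using EV eE by blast
      then show "\<exists>a b. ends e = {a, b} \<and> a \<in> V \<and> b \<in> V" using ab by blast
    qed
    have finT: "finite T" using finE assms(7) finite_subset by blast
    have "card T + card (comps ends T V) = card V"
      by (rule forest_count[OF finT finV TVe Tacyc])
    moreover have "card (comps ends T V) = 1"
      using conn_iff[of V T ends] finV Vne EV assms(7) Tconn by blast
    ultimately have cardTV: "card T + 1 = card V" by simp
    define n where "n S = card (fst S - R)" for S :: "'v set \<times> 'e set"
    define ind where "ind S = (if S \<in> S2 \<and> is_tree ends (fst S) (T \<inter> snd S) then 1 else (0::nat))"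
      for S :: "'v set \<times> 'e set"
    have per: "card (T \<inter> snd S) = n S + ind S" if S: "S \<in> Segs" for S
    proof -
      define W where "W = fst S"
      define F where "F = T \<inter> snd S"
      have finW: "finite W" using fsub S finV W_def finite_subset by blast
      have finF: "finite F" using finT F_def by simp
      have FW: "\<forall>e\<in>F. ends e \<subseteq> W" using segs S F_def W_def by blast
      have FWe: "\<forall>e\<in>F. \<exists>a b. ends e = {a, b} \<and> a \<in> W \<and> b \<in> W"
      proof
        fix e assume e: "e \<in> F"
        then obtain a b where ab: "ends e = {a, b}" using Eform assms(7) F_def by blast
        then show "\<exists>a b. ends e = {a, b} \<and> a \<in> W \<and> b \<in> W" using FW e by blast
      qed
      have Facyc: "\<not> (\<exists>vs es. closed_path ends F vs es)"
        using Tacyc closed_path_mono[of F T ends] F_def by blast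
      have fc: "card F + card (comps ends F W) = card W"
        by (rule forest_count[OF finF finW FWe Facyc])
      have rS: "card (W \<inter> R) = 1 \<or> card (W \<inter> R) = 2" using r1 r2 S Segs_def W_def by blast
      then have WRne: "W \<inter> R \<noteq> {}" by auto
      have loc: "\<forall>e\<in>T. \<forall>x\<in>ends e. x \<in> W - R \<longrightarrow> e \<in> snd S"
      proof (intro ballI impI)
        fix e x assume e: "e \<in> T" and x: "x \<in> ends e" "x \<in> W - R"
        then obtain S' where S': "S' \<in> Segs" "e \<in> snd S'" using ce assms(7) Segs_def by blast
        then have "x \<in> fst S'" using segs x by blast
        then have "S' = S" using disj S S' x W_def Segs_def by blast
        then show "e \<in> snd S" using S' by simp
      qed
      have reachR: "\<forall>v\<in>W. \<exists>q\<in>W \<inter> R. reach ends F v q"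
      proof
        fix v assume v: "v \<in> W"
        obtain r0 where r0: "r0 \<in> W \<inter> R" using WRne by blast
        have "v \<in> V" "r0 \<in> V" using v r0 fsub S W_def by auto
        then obtain vs es where w: "walk ends T vs es" "hd vs = v" "last vs = r0"
          using Tconn unfolding connected_on_def by blast
        have "\<exists>r\<in>W \<inter> R. reach ends (T \<inter> snd S) (hd vs) r"
          by (rule walk_to_R[OF w(1)]) (use w v r0 loc segs S W_def in auto)
        then show "\<exists>q\<in>W \<inter> R. reach ends F v q" using w(2) F_def by simp
      qed
      have le: "card (comps ends F W) \<le> card (W \<inter> R)"
        by (rule comps_le[OF finW _ reachR]) blast
      have ge: "card (comps ends F W) \<ge> 1" using comps_ge[OF finW] WRne by blast
      have cW: "card W = n S + card (W \<inter> R)"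
      proof -
        have "card (W - R) = card W - card (W \<inter> R)" using finW by (simp add: card_Diff_subset_Int)
        moreover have "card (W \<inter> R) \<le> card W" using finW by (simp add: card_mono)
        ultimately show ?thesis unfolding n_def W_def by simp
      qed
      have tree_iff: "is_tree ends W F \<longleftrightarrow> card (comps ends F W) = 1"
        using conn_iff[OF finW _ FW] WRne FW Facyc unfolding is_tree_def by blast
      show ?thesis
      proof (cases "S \<in> S2")
        case True
        then have "card (W \<inter> R) = 2" using r2 W_def by blast
        then show ?thesis using fc le ge cW tree_iff True unfolding ind_def W_def F_def by auto
      next
        case False
        then have "S \<in> S1" using S Segs_def by blast
        then have "card (W \<inter> R) = 1" using r1 W_def by blast
        then show ?thesis using fc le ge cW False unfolding ind_def W_def F_def by auto
      qed
    qed
    have cardT: "card T = (\<Sum>S\<in>Segs. card (T \<inter> snd S))"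
    proof -
      have "T = (\<Union>S\<in>Segs. T \<inter> snd S)" using ce assms(7) Segs_def by blast
      moreover have "card (\<Union>S\<in>Segs. T \<inter> snd S) = (\<Sum>S\<in>Segs. card (T \<inter> snd S))"
      proof (rule card_UN_disjoint[OF finSegs])
        show "\<forall>S\<in>Segs. finite (T \<inter> snd S)" using finT by blast
        show "\<forall>S\<in>Segs. \<forall>S'\<in>Segs. S \<noteq> S' \<longrightarrow> (T \<inter> snd S) \<inter> (T \<inter> snd S') = {}"
          using disj unfolding Segs_def by blast
      qed
      ultimately show ?thesis by simp
    qed
    have cardVR: "card (V - R) = (\<Sum>S\<in>Segs. n S)"
    proof -
      have "V - R = (\<Union>S\<in>Segs. fst S - R)" using cv Segs_def by blast
      moreover have "card (\<Union>S\<in>Segs. fst S - R) = (\<Sum>S\<in>Segs. card (fst S - R))"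
      proof (rule card_UN_disjoint[OF finSegs])
        show "\<forall>S\<in>Segs. finite (fst S - R)" using fsub finV finite_subset by blast
        show "\<forall>S\<in>Segs. \<forall>S'\<in>Segs. S \<noteq> S' \<longrightarrow> (fst S - R) \<inter> (fst S' - R) = {}"
          using disj Segs_def by blast
      qed
      ultimately show ?thesis unfolding n_def by simp
    qed
    have cardV: "card V = l + card (V - R)"
    proof -
      have "card (V - R) = card V - card R" using assms(3) finV by (simp add: card_Diff_subset finite_subset)
      moreover have "card R \<le> card V" using assms(3) finV by (simp add: card_mono)
      ultimately show ?thesis using assms(5) by simp
    qed
    have sumind: "(\<Sum>S\<in>Segs. ind S) = card {S \<in> S2. is_tree ends (fst S) (T \<inter> snd S)}"
    proof -
      have "(\<Sum>S\<in>Segs. ind S) = (\<Sum>S\<in>{S\<in>Segs. S \<in> S2 \<and> is_tree ends (fst S) (T \<inter> snd S)}. 1)"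
        unfolding ind_def using sum.inter_filter[OF finSegs, of "\<lambda>_. (1::nat)"] by simp
      also have "{S\<in>Segs. S \<in> S2 \<and> is_tree ends (fst S) (T \<inter> snd S)} = {S \<in> S2. is_tree ends (fst S) (T \<inter> snd S)}"
        unfolding Segs_def by blast
      finally show ?thesis by simp
    qed
    have "card T = (\<Sum>S\<in>Segs. n S + ind S)" using cardT per by simp
    also have "\<dots> = card (V - R) + card {S \<in> S2. is_tree ends (fst S) (T \<inter> snd S)}"
      by (simp add: sum.distrib cardVR sumind)
    finally show ?thesis using cardTV cardV by simp
  qed
qed

end
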